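(* Let $n$ be a positive integer, let $\lambda$ be an eigenvalue of the Fibonacci--Redheffer matrix $F_R(n)$, and let $\mathbf{x}=[x_i]_{i=1}^n$ be a corresponding eigenvector. Then $x_1\neq 0$.
   Context: The Fibonacci numbers are $F_1=F_2=1$, $F_n=F_{n-1}+F_{n-2}$ for $n\ge 3$. The Fibonacci--Redheffer matrix $F_R(n)=[F_R(i,j)]_{i,j=1}^n$ is defined by $F_R(i,j)=1$ if $j=1$; $F_R(i,j)=F_i$ if $i\mid j$; and $F_R(i,j)=0$ otherwise. An eigenvector for $\lambda$ is a nonzero vector $\mathbf{x}$ with $(F_R(n)-\lambda I_n)\mathbf{x}=\mathbf{0}$. *)

theory Defs
  imports "HOL-Number_Theory.Fib" "Jordan_Normal_Form.Char_Poly"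
begin

text \<open>Fibonacci--Redheffer matrix F_R(n), entries over the complex numbers.
  Isabelle matrices are 0-indexed: entry (i,j) here is the paper's entry (i+1,j+1).
  fib 1 = fib 2 = 1 as in the paper.\<close>
definition fib_redheffer :: "nat \<Rightarrow> complex mat" where
  "fib_redheffer n = mat n n (\<lambda>(i, j).
     if j = 0 then 1
     else if (i + 1) dvd (j + 1) then of_nat (fib (i + 1))
     else 0)"

end

theory Submission
  imports Defs
begin

lemma fib_strict_step: "fib (Suc (Suc k)) < fib (Suc (Suc (Suc k)))"
proof -
  have "fib (Suc (Suc (Suc k))) = fib (Suc (Suc k)) + fib (Suc k)" by simp
  moreover have "fib (Suc k) > 0" by (simp add: fib_neq_0_nat)
  ultimately show ?thesis by linarith
qed

lemma fib_strict: "2 \<le> a \<Longrightarrow> a < b \<Longrightarrow> fib a < fib b"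
proof (induction b)
  case 0 then show ?case by simp
next
  case (Suc b)
  define k where "k = b - 2"
  have k: "b = Suc (Suc k)" using Suc.prems unfolding k_def by simp
  have st: "fib b < fib (Suc b)" using fib_strict_step[of k] k by simp
  show ?case
  proof (cases "a = b")
    case True then show ?thesis using st by simp
  next
    case False then have "a < b" using Suc.prems by simp
    then show ?thesis using Suc.IH Suc.prems st by simp
  qed
qed

theorem lemma2:
  fixes n :: nat and lam :: complex and x :: "complex vec"
  assumes "n > 0"
    and "eigenvalue (fib_redheffer n) lam"
    and "eigenvector (fib_redheffer n) x lam"
  shows "x $ 0 \<noteq> 0"
proof
  assume x0: "x $ 0 = 0"
  define A where "A = fib_redheffer n"
  have dimA: "dim_row A = n" "dim_col A = n" unfolding A_def fib_redheffer_def by auto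
  have xc: "x \<in> carrier_vec n" and xnz: "x \<noteq> 0\<^sub>v n" and ev: "A *\<^sub>v x = lam \<cdot>\<^sub>v x"
    using assms(3) unfolding eigenvector_def A_def[symmetric] dimA by auto
  have dx: "dim_vec x = n" using xc by auto
  define f where "f j = x $ j" for j
  have row: "(\<Sum>j<n. (if 0 < j \<and> (i+1) dvd (j+1) then f j else 0)) * of_nat (fib (i+1)) = lam * f i"
    if "i < n" for i
  proof -
    have "(A *\<^sub>v x) $ i = lam * f i" using ev that dx f_def by simp
    moreover have "(A *\<^sub>v x) $ i = (\<Sum>j\<in>{0..<n}. A $$ (i, j) * f j)"
      using that dimA dx unfolding f_def by (simp add: scalar_prod_def)
    moreover have "(\<Sum>j\<in>{0..<n}. A $$ (i, j) * f j)
        = (\<Sum>j<n. (if 0 < j \<and> (i+1) dvd (j+1) then f j else 0) * of_nat (fib (i+1)))"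
      using that x0 unfolding A_def fib_redheffer_def f_def
      by (intro sum.cong) auto
    ultimately show ?thesis by (simp add: sum_distrib_right)
  qed
  define S where "S = {j. j < n \<and> f j \<noteq> 0}"
  have Sfin: "finite S" unfolding S_def by auto
  have Sne: "S \<noteq> {}"
  proof
    assume "S = {}"
    then have "\<forall>j<n. x $ j = 0" unfolding S_def f_def by auto
    then have "x = 0\<^sub>v n" using dx by (intro eq_vecI) auto
    then show False using xnz by simp
  qed
  define m where "m = Max S"
  have mS: "m \<in> S" unfolding m_def using Sfin Sne by simp
  have mn: "m < n" and fm: "f m \<noteq> 0" using mS unfolding S_def by auto
  have m0: "m > 0" using fm x0 f_def by (cases m) auto
  have above: "f j = 0" if "m < j" "j < n" for j
  proof (rule ccontr)
    assume "f j \<noteq> 0" then have "j \<in> S" using that unfolding S_def by auto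
    then have "j \<le> m" unfolding m_def using Sfin by simp
    then show False using that by simp
  qed
  have rowm: "(\<Sum>j<n. (if j = m then f j else 0)) * of_nat (fib (m+1)) = lam * f m"
  proof -
    have "(\<Sum>j<n. (if 0 < j \<and> (m+1) dvd (j+1) then f j else 0)) = (\<Sum>j<n. (if j = m then f j else 0))"
    proof (intro sum.cong refl)
      fix j assume "j \<in> {..<n}"
      show "(if 0 < j \<and> (m+1) dvd (j+1) then f j else 0) = (if j = m then f j else 0)"
      proof (cases "j < m")
        case True
        then have "\<not> (m+1) dvd (j+1)" using nat_dvd_not_less by auto
        then show ?thesis using True by auto
      next
        case False
        then show ?thesis using above \<open>j \<in> {..<n}\<close> m0 by (cases "j = m") auto
      qed
    qed
    then show ?thesis using row[OF mn] by simp
  qed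
  have "(\<Sum>j<n. (if j = m then f j else 0)) = f m"
    using mn by (subst sum.delta) auto
  with rowm have "f m * of_nat (fib (m+1)) = lam * f m" by simp
  then have lam: "lam = of_nat (fib (m+1))" using fm by (simp add: mult.commute)
  define g where "g j = f j / f m" for j
  have gm: "g m = 1" using fm g_def by simp
  have rowg: "(\<Sum>j<n. (if 0 < j \<and> (i+1) dvd (j+1) then g j else 0)) * of_nat (fib (i+1)) = lam * g i"
    if "i < n" for i
  proof -
    have "(\<Sum>j<n. (if 0 < j \<and> (i+1) dvd (j+1) then g j else 0)) = (\<Sum>j<n. (if 0 < j \<and> (i+1) dvd (j+1) then f j else 0)) / f m"
      unfolding g_def sum_divide_distrib by (intro sum.cong) auto
    then show ?thesis using row[OF that] unfolding g_def by (simp add: field_simps)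
  qed
  have pos: "Im (g j) = 0 \<and> Re (g j) \<ge> 0" if "j < n" for j
    using that
  proof (induction "n - j" arbitrary: j rule: less_induct)
    case (less j)
    show ?case
    proof (cases "m < j")
      case True then show ?thesis using above less.prems g_def by simp
    next
      case False
      show ?thesis
      proof (cases "j = m")
        case True then show ?thesis using gm by simp
      next
        case jm: False
        with False have jlt: "j < m" by simp
        show ?thesis
        proof (cases "j = 0")
          case True then show ?thesis using x0 f_def g_def by simp
        next
          case j0: False
          define T where "T = (\<Sum>j'\<in>{j<..<n}. (if (j+1) dvd (j'+1) then g j' else 0))"
          have IHs: "Im (if (j+1) dvd (j'+1) then g j' else 0) = 0 \<and> Re (if (j+1) dvd (j'+1) then g j' else 0) \<ge> 0"
            if "j' \<in> {j<..<n}" for j'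
            using less.hyps[of j'] that by auto
          have TIm: "Im T = 0" unfolding T_def using IHs by (simp add: Im_sum)
          have TRe: "Re T \<ge> 0" unfolding T_def Re_sum by (rule sum_nonneg) (use IHs in blast)
          have split: "(\<Sum>j'<n. (if 0 < j' \<and> (j+1) dvd (j'+1) then g j' else 0)) = g j + T"
          proof -
            have e: "{..<n} = {..<j} \<union> {j} \<union> {j<..<n}" using less.prems by auto
            have z: "(\<Sum>j'<j. (if 0 < j' \<and> (j+1) dvd (j'+1) then g j' else 0)) = 0"
              proof (intro sum.neutral ballI)
              fix x assume "x \<in> {..<j}"
              then have "\<not> Suc j dvd Suc x" using nat_dvd_not_less[of "Suc x" "Suc j"] by auto
              then show "(if 0 < x \<and> (j+1) dvd (x+1) then g x else 0) = 0" by simp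
            qed
            have "(\<Sum>j'<n. (if 0 < j' \<and> (j+1) dvd (j'+1) then g j' else 0))
              = (\<Sum>j'<j. (if 0 < j' \<and> (j+1) dvd (j'+1) then g j' else 0))
               + (if 0 < j \<and> (j+1) dvd (j+1) then g j else 0)
               + (\<Sum>j'\<in>{j<..<n}. (if 0 < j' \<and> (j+1) dvd (j'+1) then g j' else 0))"
              unfolding e by (subst sum.union_disjoint; auto)+
            also have "(\<Sum>j'\<in>{j<..<n}. (if 0 < j' \<and> (j+1) dvd (j'+1) then g j' else 0)) = T"
              unfolding T_def by (intro sum.cong) auto
            finally show ?thesis using z j0 by simp
          qed
          have eq: "(g j + T) * of_nat (fib (j+1)) = of_nat (fib (m+1)) * g j"
            using rowg[OF less.prems] split lam by simp
          have flt: "fib (j+1) < fib (m+1)" using j0 jlt by (intro fib_strict) auto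
          define c where "c = real (fib (m+1)) - real (fib (j+1))"
          have cpos: "c > 0" using flt c_def by simp
          have "g j * of_real c = T * of_nat (fib (j+1))"
            using eq unfolding c_def by (simp add: algebra_simps)
          then have gj: "g j = T * of_nat (fib (j+1)) / of_real c" using cpos by (simp add: field_simps)
          show ?thesis using TIm TRe cpos unfolding gj
            by (simp add: Re_divide Im_divide)
        qed
      qed
    qed
  qed
  have "(\<Sum>j<n. (if 0 < j \<and> (0+1) dvd (j+1) then g j else 0)) * of_nat (fib (0+1)) = lam * g 0"
    using rowg assms(1) by blast
  then have s0: "(\<Sum>j<n. (if 0 < j then g j else 0)) = 0" using x0 f_def g_def by simp
  have "Re (\<Sum>j<n. (if 0 < j then g j else 0)) \<ge> Re (if 0 < m then g m else 0)"
    unfolding Re_sum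
    by (rule member_le_sum) (use pos mn in auto)
  then show False using s0 gm m0 by simp
qed

end
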